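(* There exists a simple temporal graph $\mathcal G$ whose non-strict-journey reachability graph is not isomorphic to the reachability graph of any happy temporal graph $\mathcal H$. (For instance, $\mathcal G$ on vertices $a,b,c,d,e$ with edges $ac,ad$ labeled $1$, $bc,de$ labeled $2$, and $cd$ labeled $3$.)
   Context: A temporal graph is a triple $\mathcal G=(V,E,\lambda)$ where $V$ is a finite vertex set, $E$ is a set of undirected edges on $V$, and $\lambda:E\to 2^{\mathbb N}\setminus\{\emptyset\}$ assigns to each edge a nonempty set of presence times. The footprint of $\mathcal G$ is the static graph $(V,E)$. A contact is a pair $(e,t)$ with $e\in E$ and $t\in\lambda(e)$. A journey from $u$ to $v$ is a sequence of contacts $(e_1,t_1),\dots,(e_k,t_k)$, $k\ge 1$, such that $e_1,\dots,e_k$ form a path from $u$ to $v$ in the footprint and $t_1\le t_2\le\dots\le t_k$ (a non-strict journey); it is strict if $t_1<t_2<\dots<t_k$. $\mathcal G$ is proper if $\lambda(e)\cap\lambda(e')=\emptyset$ for any two distinct edges $e,e'$ sharing an endpoint (in a proper graph every journey is strict); simple if $|\lambda(e)|=1$ for every edge $e$; happy if it is both proper and simple. The reachability graph $\mathcal C(\mathcal G)$ (with respect to a chosen journey notion) is the directed graph on $V$ having an arc $(u,v)$, $u\neq v$, if and only if there is a journey from $u$ to $v$. Reachability graphs are compared up to isomorphism of directed graphs. *)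

theory Defs
  imports Main
begin

definition temporal_graph :: "'a set \<Rightarrow> 'a set set \<Rightarrow> ('a set \<Rightarrow> nat set) \<Rightarrow> bool" where
  "temporal_graph V E lam \<longleftrightarrow> finite V \<and>
     (\<forall>e\<in>E. \<exists>u v. u \<noteq> v \<and> u \<in> V \<and> v \<in> V \<and> e = {u, v}) \<and>
     (\<forall>e\<in>E. lam e \<noteq> {})"

definition proper :: "'a set set \<Rightarrow> ('a set \<Rightarrow> nat set) \<Rightarrow> bool" where
  "proper E lam \<longleftrightarrow> (\<forall>e\<in>E. \<forall>e'\<in>E. e \<noteq> e' \<and> e \<inter> e' \<noteq> {} \<longrightarrow> lam e \<inter> lam e' = {})"

definition simple_tg :: "'a set set \<Rightarrow> ('a set \<Rightarrow> nat set) \<Rightarrow> bool" where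
  "simple_tg E lam \<longleftrightarrow> (\<forall>e\<in>E. card (lam e) = 1)"

definition happy :: "'a set set \<Rightarrow> ('a set \<Rightarrow> nat set) \<Rightarrow> bool" where
  "happy E lam \<longleftrightarrow> proper E lam \<and> simple_tg E lam"

definition journey :: "bool \<Rightarrow> 'a set set \<Rightarrow> ('a set \<Rightarrow> nat set) \<Rightarrow> 'a \<Rightarrow> 'a \<Rightarrow> 'a list \<Rightarrow> nat list \<Rightarrow> bool" where
  "journey strict E lam u v vs ts \<longleftrightarrow>
     length vs \<ge> 2 \<and> length ts = length vs - 1 \<and>
     hd vs = u \<and> last vs = v \<and> distinct vs \<and>
     (\<forall>i < length ts. {vs ! i, vs ! Suc i} \<in> E \<and> ts ! i \<in> lam {vs ! i, vs ! Suc i}) \<and>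
     (if strict then sorted_wrt (<) ts else sorted ts)"

definition reach_arcs :: "bool \<Rightarrow> 'a set \<Rightarrow> 'a set set \<Rightarrow> ('a set \<Rightarrow> nat set) \<Rightarrow> ('a \<times> 'a) set" where
  "reach_arcs strict V E lam =
     {(u, v). u \<in> V \<and> v \<in> V \<and> u \<noteq> v \<and> (\<exists>vs ts. journey strict E lam u v vs ts)}"

definition digraph_iso :: "'a set \<Rightarrow> ('a \<times> 'a) set \<Rightarrow> 'b set \<Rightarrow> ('b \<times> 'b) set \<Rightarrow> bool" where
  "digraph_iso V1 A1 V2 A2 \<longleftrightarrow>
     (\<exists>f. bij_betw f V1 V2 \<and> (\<forall>u\<in>V1. \<forall>v\<in>V1. (u, v) \<in> A1 \<longleftrightarrow> (f u, f v) \<in> A2))"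

end

theory Submission
  imports Defs
begin


definition Rj :: "bool \<Rightarrow> 'a set set \<Rightarrow> ('a set \<Rightarrow> nat set) \<Rightarrow> 'a set \<Rightarrow> 'a \<Rightarrow> 'a \<Rightarrow> nat \<Rightarrow> bool" where
  "Rj st F mu S u v t \<longleftrightarrow> (\<exists>vs ts. journey st F mu u v vs ts \<and> set vs \<subseteq> S \<and> last ts = t)"

lemma journey_pred:
  assumes J: "journey st F mu u v vs ts"
  shows "(vs = [u,v] \<and> {u,v} \<in> F \<and> last ts \<in> mu {u,v}) \<or>
    (\<exists>vs' ts'. journey st F mu u (last vs') vs' ts' \<and> vs = vs' @ [v] \<and>
        {last vs', v} \<in> F \<and> last ts \<in> mu {last vs', v} \<and>
        (if st then last ts' < last ts else last ts' \<le> last ts))"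
proof -
  from J have L: "length vs \<ge> 2" "length ts = length vs - 1" "hd vs = u" "last vs = v"
    "distinct vs" and E: "\<forall>i < length ts. {vs ! i, vs ! Suc i} \<in> F \<and> ts ! i \<in> mu {vs ! i, vs ! Suc i}"
    and S: "if st then sorted_wrt (<) ts else sorted ts"
    unfolding journey_def by auto
  show ?thesis
  proof (cases "length vs = 2")
    case True
    then obtain x y where vs: "vs = [x,y]"
      by (metis (no_types, lifting) One_nat_def Suc_1 length_0_conv length_Suc_conv)
    with L have "x = u" "y = v" by auto
    moreover from L True obtain t where "ts = [t]"
      by (metis One_nat_def diff_Suc_1 length_0_conv length_Suc_conv numeral_2_eq_2)
    moreover from E this vs have "{x,y} \<in> F \<and> t \<in> mu {x,y}" by auto
    ultimately show ?thesis using vs by auto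
  next
    case False
    define vs' where "vs' = butlast vs"
    define ts' where "ts' = butlast ts"
    have vsE: "vs = vs' @ [v]" using L vs'_def
      by (metis append_butlast_last_id list.size(3) not_numeral_le_zero)
    have tsne: "ts \<noteq> []" using L by auto
    have tsE: "ts = ts' @ [last ts]" using tsne ts'_def by simp
    have lv': "length vs' \<ge> 2" using L False vsE by auto
    have lt': "length ts' = length vs' - 1" using L vsE tsE
      by (metis diff_Suc_1 length_append_singleton ts'_def length_butlast)
    have hd': "hd vs' = u" using L vsE lv'
      by (metis hd_append2 list.size(3) not_numeral_le_zero)
    have d': "distinct vs'" using L vsE by auto
    have E': "\<forall>i < length ts'. {vs' ! i, vs' ! Suc i} \<in> F \<and> ts' ! i \<in> mu {vs' ! i, vs' ! Suc i}"
    proof (intro allI impI)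
      fix i assume i: "i < length ts'"
      then have "i < length ts" using tsE by (metis length_append_singleton less_SucI)
      with E have "{vs ! i, vs ! Suc i} \<in> F \<and> ts ! i \<in> mu {vs ! i, vs ! Suc i}" by auto
      moreover have "vs ! i = vs' ! i" "vs ! Suc i = vs' ! Suc i"
        using i lt' lv' vsE by (auto simp: nth_append)
      moreover have "ts ! i = ts' ! i" using i by (metis butlast_snoc nth_butlast tsE)
      ultimately show "{vs' ! i, vs' ! Suc i} \<in> F \<and> ts' ! i \<in> mu {vs' ! i, vs' ! Suc i}" by simp
    qed
    have S': "if st then sorted_wrt (<) ts' else sorted ts'"
      using S tsE by (cases st) (metis sorted_wrt_append, metis sorted_append)
    have J': "journey st F mu u (last vs') vs' ts'"
      unfolding journey_def using lv' lt' hd' d' E' S' by auto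
    have ilast: "length ts' < length ts" "length ts' = length ts - 1" using tsE by (metis length_append_singleton lessI, metis diff_Suc_1 length_append_singleton)
    have "{vs ! length ts', vs ! Suc (length ts')} \<in> F \<and> ts ! length ts' \<in> mu {vs ! length ts', vs ! Suc (length ts')}"
      using E ilast by auto
    moreover have "vs ! length ts' = last vs'" using vsE lt' lv'
      by (metis last_conv_nth list.size(3) nth_append not_numeral_le_zero lessI diff_Suc_1 Suc_pred zero_less_numeral less_le_trans)
    moreover have "vs ! Suc (length ts') = v" using vsE lt' lv' by (auto simp: nth_append)
    moreover have "ts ! length ts' = last ts" using tsE by (metis nth_append_length)
    ultimately have e: "{last vs', v} \<in> F" "last ts \<in> mu {last vs', v}" by auto
    have ts'ne: "ts' \<noteq> []" using lt' lv' by auto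
    have "(if st then last ts' < last ts else last ts' \<le> last ts)"
    proof (cases st)
      case True
      then have "sorted_wrt (<) (ts' @ [last ts])" using S tsE by metis
      then show ?thesis using True ts'ne by (auto simp: sorted_wrt_append)
    next
      case False
      then have "sorted (ts' @ [last ts])" using S tsE by metis
      then show ?thesis using False ts'ne by (auto simp: sorted_append)
    qed
    then show ?thesis using J' vsE e by blast
  qed
qed

lemma R_pred:
  assumes "Rj st F mu S u v t"
  shows "\<exists>w\<in>S. w \<noteq> v \<and> {w,v} \<in> F \<and> t \<in> mu {w,v} \<and>
     (w = u \<or> (\<exists>t'. (if st then t' < t else t' \<le> t) \<and> Rj st F mu (S - {v}) u w t'))"
proof -
  from assms obtain vs ts where J: "journey st F mu u v vs ts" and S: "set vs \<subseteq> S" and t: "last ts = t"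
    unfolding Rj_def by auto
  from J have dv: "distinct vs" unfolding journey_def by auto
  from journey_pred[OF J] show ?thesis
  proof
    assume "vs = [u, v] \<and> {u, v} \<in> F \<and> last ts \<in> mu {u, v}"
    then show ?thesis using S t dv by auto
  next
    assume "\<exists>vs' ts'. journey st F mu u (last vs') vs' ts' \<and> vs = vs' @ [v] \<and>
        {last vs', v} \<in> F \<and> last ts \<in> mu {last vs', v} \<and>
        (if st then last ts' < last ts else last ts' \<le> last ts)"
    then obtain vs' ts' where J': "journey st F mu u (last vs') vs' ts'" and vsE: "vs = vs' @ [v]"
      and e: "{last vs', v} \<in> F" "last ts \<in> mu {last vs', v}"
      and o: "(if st then last ts' < last ts else last ts' \<le> last ts)" by blast
    have ne: "vs' \<noteq> []" using J' unfolding journey_def by auto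
    have "set vs' \<subseteq> S - {v}" using S vsE dv by auto
    then have R: "Rj st F mu (S - {v}) u (last vs') (last ts')" unfolding Rj_def using J' by blast
    have "last vs' \<in> S" "last vs' \<noteq> v" using ne S vsE dv by auto
    then show ?thesis using e R o t by blast
  qed
qed




lemma journey_W:
  assumes tg: "temporal_graph W F mu" and J: "journey st F mu u v vs ts"
  shows "set vs \<subseteq> W"
proof
  fix x assume "x \<in> set vs"
  then obtain i where i: "i < length vs" "vs ! i = x" by (metis in_set_conv_nth)
  from J have L: "length vs \<ge> 2" "length ts = length vs - 1"
    and E: "\<forall>i < length ts. {vs ! i, vs ! Suc i} \<in> F" unfolding journey_def by auto
  from tg have FW: "\<forall>e\<in>F. e \<subseteq> W" unfolding temporal_graph_def by fastforce
  show "x \<in> W"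
  proof (cases "i < length ts")
    case True
    then have "{vs ! i, vs ! Suc i} \<in> F" using E by blast
    then show ?thesis using FW i by blast
  next
    case False
    then have h: "i - 1 < length ts" "Suc (i - 1) = i" using L i by auto
    then have "{vs ! (i-1), vs ! Suc (i-1)} \<in> F" using E by blast
    then have "{vs ! (i-1), vs ! i} \<in> F" using h(2) by simp
    then show ?thesis using FW i by blast
  qed
qed

definition tau :: "('a set \<Rightarrow> nat set) \<Rightarrow> 'a set \<Rightarrow> nat" where
  "tau mu x = (THE t. t \<in> mu x)"

locale HH =
  fixes W :: "'a set" and F and mu and a b c d e :: 'a
  assumes tg: "temporal_graph W F mu" and hp: "happy F mu"
  and W: "W = {a,b,c,d,e}" and dist: "distinct [a,b,c,d,e]"
  and pos: "(a,b) \<in> reach_arcs True W F mu" "(a,e) \<in> reach_arcs True W F mu"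
     "(c,e) \<in> reach_arcs True W F mu" "(c,b) \<in> reach_arcs True W F mu"
     "(d,e) \<in> reach_arcs True W F mu" "(d,b) \<in> reach_arcs True W F mu"
     "(b,c) \<in> reach_arcs True W F mu" "(b,d) \<in> reach_arcs True W F mu"
     "(e,c) \<in> reach_arcs True W F mu" "(e,d) \<in> reach_arcs True W F mu"
  and neg: "(b,a) \<notin> reach_arcs True W F mu" "(b,e) \<notin> reach_arcs True W F mu"
     "(e,a) \<notin> reach_arcs True W F mu" "(e,b) \<notin> reach_arcs True W F mu"
begin

abbreviation Arc where "Arc x y \<equiv> (x,y) \<in> reach_arcs True W F mu"
abbreviation T where "T x \<equiv> tau mu x"
abbreviation RR where "RR S u v t \<equiv> Rj True F mu S u v t"

lemma edgeW: assumes "{x,y} \<in> F" shows "x \<noteq> y \<and> x \<in> W \<and> y \<in> W"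
proof -
  have FF: "\<forall>e\<in>F. \<exists>u v. u \<noteq> v \<and> u \<in> W \<and> v \<in> W \<and> e = {u, v}"
    using tg unfolding temporal_graph_def by (rule conjunct1[OF conjunct2])
  obtain u v where uv: "u \<noteq> v" "u \<in> W" "v \<in> W" "{x,y} = {u,v}"
    using FF[rule_format, OF assms] by blast
  then have "x = u \<and> y = v \<or> x = v \<and> y = u" by (simp add: doubleton_eq_iff)
  then show ?thesis using uv by auto
qed

lemma tau_eq: "x \<in> F \<Longrightarrow> t \<in> mu x \<longleftrightarrow> t = T x"
proof -
  assume "x \<in> F"
  with hp have "card (mu x) = 1" unfolding happy_def simple_tg_def by auto
  then obtain s where "mu x = {s}" by (auto simp: card_1_singleton_iff)
  then show "t \<in> mu x \<longleftrightarrow> t = T x" unfolding tau_def by auto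
qed

lemma edge_arc: assumes "{x,y} \<in> F" shows "Arc x y"
proof -
  have xy: "x \<noteq> y" "x \<in> W" "y \<in> W" using edgeW[OF assms] by auto
  have "journey True F mu x y [x,y] [T {x,y}]"
    unfolding journey_def using xy assms tau_eq[OF assms] by auto
  then show ?thesis unfolding reach_arcs_def using xy by blast
qed

lemma two_step:
  assumes "{x,y} \<in> F" "{y,z} \<in> F" "T {x,y} < T {y,z}" "x \<noteq> z"
  shows "Arc x z"
proof -
  have xy: "x \<noteq> y" "x \<in> W" "y \<in> W" "y \<noteq> z" "z \<in> W" using edgeW[OF assms(1)] edgeW[OF assms(2)] by auto
  have "journey True F mu x z [x,y,z] [T {x,y}, T {y,z}]"
    unfolding journey_def using xy assms tau_eq[OF assms(1)] tau_eq[OF assms(2)]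
    by (auto simp: less_Suc_eq nth_Cons')
  then show ?thesis unfolding reach_arcs_def using xy assms(4) by blast
qed

lemma proper_ne:
  assumes "{x,y} \<in> F" "{y,z} \<in> F" "x \<noteq> z"
  shows "T {x,y} \<noteq> T {y,z}"
proof -
  have "{x,y} \<noteq> {y,z}" using assms by (auto simp: doubleton_eq_iff)
  moreover have "{x,y} \<inter> {y,z} \<noteq> {}" by auto
  moreover have P: "proper F mu" using hp unfolding happy_def by blast
  ultimately have "mu {x,y} \<inter> mu {y,z} = {}" using P[unfolded proper_def, rule_format, OF assms(1) assms(2)] by blast
  then show ?thesis using tau_eq[OF assms(1)] tau_eq[OF assms(2)] by blast
qed

lemma arc_R: "Arc u v \<Longrightarrow> \<exists>t. RR W u v t"
  unfolding reach_arcs_def Rj_def using journey_W[OF tg] by blast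

lemma R_arc: assumes "RR S u w t" "S \<subseteq> W" "u \<noteq> w" shows "Arc u w"
proof -
  from assms obtain vs ts where J: "journey True F mu u w vs ts" "set vs \<subseteq> S" unfolding Rj_def by auto
  then have "vs \<noteq> []" "hd vs = u" "last vs = w" unfolding journey_def by auto
  then have "u \<in> W" "w \<in> W" using J assms(2) by (metis hd_in_set last_in_set subset_iff)+
  then show ?thesis unfolding reach_arcs_def using J assms by auto
qed

lemma first_edge: assumes "Arc u v" shows "\<exists>y. {u,y} \<in> F"
proof -
  from assms obtain vs ts where J: "journey True F mu u v vs ts" unfolding reach_arcs_def by auto
  then have "length ts > 0" "{vs ! 0, vs ! Suc 0} \<in> F" "hd vs = u" "vs \<noteq> []" unfolding journey_def by auto
  then show ?thesis by (metis hd_conv_nth)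
qed

lemma predW:
  assumes "RR S u v t" "S \<subseteq> W"
  shows "\<exists>w\<in>S. w \<noteq> v \<and> {w,v} \<in> F \<and> t = T {w,v} \<and>
     (w = u \<or> (Arc u w \<and> (\<exists>t'. t' < t \<and> RR (S - {v}) u w t')))"
proof -
  from R_pred[OF assms(1)] obtain w where w: "w\<in>S" "w \<noteq> v" "{w,v} \<in> F" "t \<in> mu {w,v}"
    "w = u \<or> (\<exists>t'. t' < t \<and> RR (S - {v}) u w t')" by auto
  have "w = u \<or> (Arc u w \<and> (\<exists>t'. t' < t \<and> RR (S - {v}) u w t'))"
    using w(5) R_arc assms(2) by (metis Diff_subset order_trans)
  then show ?thesis using w tau_eq[OF w(3)] by blast
qed

lemma edge_arc2: assumes "{x,y} \<in> F" shows "Arc x y" "Arc y x" "x \<in> W" "y \<in> W" "x \<noteq> y"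
  using edge_arc[OF assms] edge_arc[of y x] assms edgeW[OF assms] by (auto simp: insert_commute)

lemma nbr:
  "{w,a} \<in> F \<Longrightarrow> w = c \<or> w = d"
  "{w,b} \<in> F \<Longrightarrow> w = c \<or> w = d"
  "{w,e} \<in> F \<Longrightarrow> w = c \<or> w = d"
proof -
  assume h: "{w,a} \<in> F"
  from edge_arc2[OF h] neg W dist show "w = c \<or> w = d" by auto
next
  assume h: "{w,b} \<in> F"
  from edge_arc2[OF h] neg W dist show "w = c \<or> w = d" by auto
next
  assume h: "{w,e} \<in> F"
  from edge_arc2[OF h] neg W dist show "w = c \<or> w = d" by auto
qed

end



context HH begin

lemma main_case:
  assumes bc: "{b,c} \<in> F" and nbd: "{b,d} \<notin> F"
  shows False
proof -
  note D = dist W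
  have nbd': "{d,b} \<notin> F" using nbd by (simp add: insert_commute)
  have Ws: "W \<subseteq> W" "W - {d} \<subseteq> W" "W - {b} \<subseteq> W" "W - {c} \<subseteq> W" "W - {e} \<subseteq> W"
    "W - {b} - {c} \<subseteq> W" "W - {e} - {d} \<subseteq> W" by auto
  obtain t0 where R0: "RR W b d t0" using arc_R pos(8) by blast
  obtain w where w: "w\<in>W" "w\<noteq>d" "{w,d}\<in>F" "t0 = T{w,d}"
    and wo: "w=b \<or> (Arc b w \<and> (\<exists>t'. t'<t0 \<and> RR (W-{d}) b w t'))"
    using predW[OF R0 Ws(1)] by blast
  have "w \<noteq> b" using w nbd by auto
  with wo have wA: "Arc b w" and "\<exists>t'. t'<t0 \<and> RR (W-{d}) b w t'" by auto
  have wc: "w = c" using w(1,2) \<open>w\<noteq>b\<close> wA neg D by auto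
  have cd: "{c,d} \<in> F" using w wc by simp
  obtain t1 where t1: "t1 < T{c,d}" "RR (W-{d}) b c t1" using \<open>\<exists>t'. t'<t0 \<and> RR (W-{d}) b w t'\<close> w(4) wc by blast
  obtain w1 where w1: "w1\<in>W-{d}" "w1\<noteq>c" "{w1,c}\<in>F" "t1 = T{w1,c}"
    and w1o: "w1=b \<or> (Arc b w1 \<and> (\<exists>t'. t'<t1 \<and> RR (W-{d}-{c}) b w1 t'))"
    using predW[OF t1(2) Ws(2)] by blast
  have "w1 = b" using w1 w1o neg D by auto
  then have s1: "T{b,c} < T{c,d}" using w1 t1 by simp
  have nce: "{c,e} \<notin> F"
  proof
    assume ce: "{c,e} \<in> F"
    have "T{b,c} \<noteq> T{c,e}" using proper_ne[OF bc ce] D by auto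
    then consider "T{b,c} < T{c,e}" | "T{e,c} < T{c,b}" by (metis insert_commute linorder_neqE_nat)
    then show False
    proof cases
      case 1 then have "Arc b e" using two_step[OF bc ce] D by auto
      then show False using neg by auto
    next
      case 2
      have "{e,c} \<in> F" "{c,b} \<in> F" using ce bc by (simp_all add: insert_commute)
      then have "Arc e b" using two_step 2 D by auto
      then show False using neg by auto
    qed
  qed
  have nec: "{e,c} \<notin> F" using nce by (simp add: insert_commute)
  obtain t4 where R4: "RR W e c t4" using arc_R pos(9) by blast
  obtain w where w: "w\<in>W" "w\<noteq>c" "{w,c}\<in>F" "t4 = T{w,c}"
    and wo: "w=e \<or> (Arc e w \<and> (\<exists>t'. t'<t4 \<and> RR (W-{c}) e w t'))"
    using predW[OF R4 Ws(1)] by blast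
  have "w \<noteq> e" using w nec by auto
  with wo have wA: "Arc e w" and "\<exists>t'. t'<t4 \<and> RR (W-{c}) e w t'" by auto
  have wd: "w = d" using w(1,2) \<open>w\<noteq>e\<close> wA neg D by auto
  obtain t1 where t1: "t1 < T{d,c}" "RR (W-{c}) e d t1" using \<open>\<exists>t'. t'<t4 \<and> RR (W-{c}) e w t'\<close> w(4) wd by blast
  obtain w1 where w1: "w1\<in>W-{c}" "w1\<noteq>d" "{w1,d}\<in>F" "t1 = T{w1,d}"
    and w1o: "w1=e \<or> (Arc e w1 \<and> (\<exists>t'. t'<t1 \<and> RR (W-{c}-{d}) e w1 t'))"
    using predW[OF t1(2) Ws(4)] by blast
  have "w1 \<noteq> b" using w1 nbd' nbd by auto
  then have "w1 = e" using w1 w1o neg D by auto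
  then have s4: "T{d,e} < T{c,d}" using w1 t1 by (simp add: insert_commute)
  obtain t6 where R6: "RR W d b t6" using arc_R pos(6) by blast
  obtain w where w: "w\<in>W" "w\<noteq>b" "{w,b}\<in>F" "t6 = T{w,b}"
    and wo: "w=d \<or> (Arc d w \<and> (\<exists>t'. t'<t6 \<and> RR (W-{b}) d w t'))"
    using predW[OF R6 Ws(1)] by blast
  have wc: "w = c" using nbr(2)[OF w(3)] nbd' w(3) by auto
  obtain t1 where t1: "t1 < T{b,c}" "RR (W-{b}) d c t1" using wo wc D w(4) by (auto simp: insert_commute)
  obtain w1 where w1: "w1\<in>W-{b}" "w1\<noteq>c" "{w1,c}\<in>F" "t1 = T{w1,c}"
    and w1o: "w1=d \<or> (Arc d w1 \<and> (\<exists>t'. t'<t1 \<and> RR (W-{b}-{c}) d w1 t'))"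
    using predW[OF t1(2) Ws(3)] by blast
  have "w1 \<noteq> d" using w1 t1 s1 by (auto simp: insert_commute)
  moreover have "w1 \<noteq> e" using w1 nec by auto
  ultimately have w1a: "w1 = a" using w1 D by auto
  obtain t2 where t2: "t2 < T{a,c}" "RR (W-{b}-{c}) d a t2" using w1o w1a w1 \<open>w1 \<noteq> d\<close> by auto
  obtain w2 where w2: "w2\<in>W-{b}-{c}" "w2\<noteq>a" "{w2,a}\<in>F" "t2 = T{w2,a}"
    using predW[OF t2(2) Ws(6)] by blast
  have "w2 = d" using nbr(1)[OF w2(3)] w2(1) by auto
  then have s6: "T{a,d} < T{a,c}" using w2 t2 by (simp add: insert_commute)
  obtain t7 where R7: "RR W c e t7" using arc_R pos(3) by blast
  obtain w where w: "w\<in>W" "w\<noteq>e" "{w,e}\<in>F" "t7 = T{w,e}"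
    and wo: "w=c \<or> (Arc c w \<and> (\<exists>t'. t'<t7 \<and> RR (W-{e}) c w t'))"
    using predW[OF R7 Ws(1)] by blast
  have wd: "w = d" using nbr(3)[OF w(3)] nce w(3) by auto
  obtain t1 where t1: "t1 < T{d,e}" "RR (W-{e}) c d t1" using wo wd D w(4) by auto
  obtain w1 where w1: "w1\<in>W-{e}" "w1\<noteq>d" "{w1,d}\<in>F" "t1 = T{w1,d}"
    and w1o: "w1=c \<or> (Arc c w1 \<and> (\<exists>t'. t'<t1 \<and> RR (W-{e}-{d}) c w1 t'))"
    using predW[OF t1(2) Ws(5)] by blast
  have "w1 \<noteq> c" using w1 t1 s4 by (auto simp: insert_commute)
  moreover have "w1 \<noteq> b" using w1 nbd' nbd by auto
  ultimately have w1a: "w1 = a" using w1 D by auto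
  obtain t2 where t2: "t2 < T{a,d}" "RR (W-{e}-{d}) c a t2" using w1o w1a w1 \<open>w1 \<noteq> c\<close> by auto
  obtain w2 where w2: "w2\<in>W-{e}-{d}" "w2\<noteq>a" "{w2,a}\<in>F" "t2 = T{w2,a}"
    using predW[OF t2(2) Ws(7)] by blast
  have "w2 = c" using nbr(1)[OF w2(3)] w2(1) by auto
  then have "T{a,c} < T{a,d}" using w2 t2 by (simp add: insert_commute)
  then show False using s6 by simp
qed

lemma swap_cd: "HH W F mu a b d c e"
  using tg hp W dist pos neg by unfold_locales auto
lemma swap_be: "HH W F mu a e c d b"
  using tg hp W dist pos neg by unfold_locales auto
lemma swap_both: "HH W F mu a e d c b"
  using tg hp W dist pos neg by unfold_locales auto

lemma contra: False
proof -
  obtain y where y: "{b,y} \<in> F" using first_edge pos(7) by blast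
  then have "{y,b} \<in> F" by (simp add: insert_commute)
  then have "y = c \<or> y = d" using nbr(2) by blast
  then have b1: "{b,c} \<in> F \<or> {b,d} \<in> F" using y by auto
  obtain z where z: "{e,z} \<in> F" using first_edge pos(9) by blast
  then have "{z,e} \<in> F" by (simp add: insert_commute)
  then have "z = c \<or> z = d" using nbr(3) by blast
  then have e1: "{e,c} \<in> F \<or> {e,d} \<in> F" using z by auto
  have bc: "{b,c} \<in> F" using b1 main_case HH.main_case[OF swap_cd] by blast
  have ec: "{e,c} \<in> F" using e1 HH.main_case[OF swap_be] HH.main_case[OF swap_both] by blast
  have ce: "{c,e} \<in> F" using ec by (simp add: insert_commute)
  have "T{b,c} \<noteq> T{c,e}" using proper_ne[OF bc ce] dist by auto
  then consider "T{b,c} < T{c,e}" | "T{e,c} < T{c,b}" by (metis insert_commute linorder_neqE_nat)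
  then show False
  proof cases
    case 1 then have "Arc b e" using two_step[OF bc ce] dist by auto
    then show False using neg by auto
  next
    case 2
    have "{c,b} \<in> F" using bc by (simp_all add: insert_commute)
    then have "Arc e b" using two_step ec 2 dist by auto
    then show False using neg by auto
  qed
qed

end



definition GV :: "nat set" where "GV = {0,1,2,3,4}"
definition GE :: "nat set set" where "GE = {{0,2},{0,3},{1,2},{3,4},{2,3}}"
definition Glam :: "nat set \<Rightarrow> nat set" where
  "Glam x = (if x = {0,2} \<or> x = {0,3} then {1} else if x = {1,2} \<or> x = {3,4} then {2} else {3})"

lemma GE_simp: "{x,y} \<in> GE \<longleftrightarrow> (x=0\<and>y=2 \<or> x=2\<and>y=0 \<or> x=0\<and>y=3 \<or> x=3\<and>y=0 \<or> x=1\<and>y=2 \<or> x=2\<and>y=1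
   \<or> x=3\<and>y=4 \<or> x=4\<and>y=3 \<or> x=2\<and>y=3 \<or> x=3\<and>y=2)"
  unfolding GE_def by (auto simp: doubleton_eq_iff)

lemma Glam_simp: "Glam {0,2} = {1}" "Glam {2,0} = {1}" "Glam {0,3} = {1}" "Glam {3,0} = {1}"
  "Glam {1,2} = {2}" "Glam {2,1} = {2}" "Glam {3,4} = {2}" "Glam {4,3} = {2}"
  "Glam {2,3} = {3}" "Glam {3,2} = {3}" "Glam {Suc 0,2} = {2}" "Glam {2,Suc 0} = {2}"
  unfolding Glam_def by (auto simp: doubleton_eq_iff)

lemma ed: "u \<noteq> v \<Longrightarrow> u \<in> GV \<Longrightarrow> v \<in> GV \<Longrightarrow> \<exists>a b. a \<noteq> b \<and> a \<in> GV \<and> b \<in> GV \<and> {u,v} = {a,b}"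
  by blast

lemma G_tg: "temporal_graph GV GE Glam"
proof -
  have "\<forall>e\<in>GE. \<exists>u v. u \<noteq> v \<and> u \<in> GV \<and> v \<in> GV \<and> e = {u, v}"
    unfolding GE_def by (simp only: ball_simps) (intro conjI ed; simp add: GV_def)
  moreover have "\<forall>e\<in>GE. Glam e \<noteq> {}" unfolding Glam_def by simp
  ultimately show ?thesis unfolding temporal_graph_def GV_def by simp
qed

lemma G_simple: "simple_tg GE Glam"
  unfolding simple_tg_def GE_def Glam_def by auto

lemma jr: "journey False GE Glam u v vs ts \<Longrightarrow> u \<in> GV \<Longrightarrow> v \<in> GV \<Longrightarrow> u \<noteq> v \<Longrightarrow>
   (u,v) \<in> reach_arcs False GV GE Glam"
  unfolding reach_arcs_def by blast

lemma all2: "(\<forall>i<Suc (Suc 0). P i) \<longleftrightarrow> P 0 \<and> P 1" by (auto simp: less_Suc_eq)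
lemma all1: "(\<forall>i<Suc 0. P i) \<longleftrightarrow> P 0" by (auto simp: less_Suc_eq)
lemma all3: "(\<forall>i<Suc (Suc (Suc 0)). P i) \<longleftrightarrow> P 0 \<and> P 1 \<and> P 2" by (auto simp: less_Suc_eq numeral_2_eq_2)


lemma pos_arcs:
  "(0,1) \<in> reach_arcs False GV GE Glam" "(0,4) \<in> reach_arcs False GV GE Glam"
  "(2,4) \<in> reach_arcs False GV GE Glam" "(2,1) \<in> reach_arcs False GV GE Glam"
  "(3,4) \<in> reach_arcs False GV GE Glam" "(3,1) \<in> reach_arcs False GV GE Glam"
  "(1,2) \<in> reach_arcs False GV GE Glam" "(1,3) \<in> reach_arcs False GV GE Glam"
  "(4,2) \<in> reach_arcs False GV GE Glam" "(4,3) \<in> reach_arcs False GV GE Glam"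
  apply (rule jr[of _ _ "[0,2,1]" "[1,2]"]; ((unfold journey_def, simp only: list.size, simp add: all1 all2 all3 GE_simp Glam_simp) | simp add: GV_def))
  apply (rule jr[of _ _ "[0,3,4]" "[1,2]"]; ((unfold journey_def, simp only: list.size, simp add: all1 all2 all3 GE_simp Glam_simp) | simp add: GV_def))
  apply (rule jr[of _ _ "[2,0,3,4]" "[1,1,2]"]; ((unfold journey_def, simp only: list.size, simp add: all1 all2 all3 GE_simp Glam_simp) | simp add: GV_def))
  apply (rule jr[of _ _ "[2,1]" "[2]"]; ((unfold journey_def, simp only: list.size, simp add: all1 all2 all3 GE_simp Glam_simp) | simp add: GV_def))
  apply (rule jr[of _ _ "[3,4]" "[2]"]; ((unfold journey_def, simp only: list.size, simp add: all1 all2 all3 GE_simp Glam_simp) | simp add: GV_def))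
  apply (rule jr[of _ _ "[3,0,2,1]" "[1,1,2]"]; ((unfold journey_def, simp only: list.size, simp add: all1 all2 all3 GE_simp Glam_simp) | simp add: GV_def))
  apply (rule jr[of _ _ "[1,2]" "[2]"]; ((unfold journey_def, simp only: list.size, simp add: all1 all2 all3 GE_simp Glam_simp) | simp add: GV_def))
  apply (rule jr[of _ _ "[1,2,3]" "[2,3]"]; ((unfold journey_def, simp only: list.size, simp add: all1 all2 all3 GE_simp Glam_simp) | simp add: GV_def))
  apply (rule jr[of _ _ "[4,3,2]" "[2,3]"]; ((unfold journey_def, simp only: list.size, simp add: all1 all2 all3 GE_simp Glam_simp) | simp add: GV_def))
  apply (rule jr[of _ _ "[4,3]" "[2]"]; ((unfold journey_def, simp only: list.size, simp add: all1 all2 all3 GE_simp Glam_simp) | simp add: GV_def))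
  done

lemma Glam_simp2: "Glam {Suc 0,0} = {3}" "Glam {0,Suc 0} = {3}" "Glam {4,0} = {3}" "Glam {0,4} = {3}"
  "Glam {Suc 0,3} = {3}" "Glam {3,Suc 0} = {3}" "Glam {Suc 0,4} = {3}" "Glam {4,Suc 0} = {3}"
  "Glam {2,4} = {3}" "Glam {4,2} = {3}"
  unfolding Glam_def by (auto simp: doubleton_eq_iff)

lemmas GS = GE_simp Glam_simp Glam_simp2 GV_def

lemma arcR: "(u,v) \<in> reach_arcs False GV GE Glam \<Longrightarrow> \<exists>t. Rj False GE Glam GV u v t"
  unfolding reach_arcs_def Rj_def using journey_W[OF G_tg] by blast

lemma n10: "\<not> Rj False GE Glam GV 1 0 t"
proof
  assume R: "Rj False GE Glam GV 1 0 t"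
  obtain w where w: "w\<in>GV" "w\<noteq>0" "{w,0}\<in>GE" "t\<in>Glam{w,0}"
    and wo: "w=1 \<or> (\<exists>t'\<le>t. Rj False GE Glam (GV-{0}) 1 w t')" using R_pred[OF R] by auto
  have wv: "w=2 \<or> w=3" using w(3) by (auto simp: GE_simp)
  then have "t = 1" using w(4) by (auto simp: Glam_simp)
  obtain t' where t': "t' \<le> 1" "Rj False GE Glam (GV-{0}) 1 w t'" using wo wv \<open>t = 1\<close> by auto
  obtain w' where w': "w'\<in>GV-{0}" "w'\<noteq>w" "{w',w}\<in>GE" "t'\<in>Glam{w',w}"
    using R_pred[OF t'(2)] by (metis (no_types, lifting))
  show False using wv w' t'(1) by (auto simp: GS)
qed

lemma n14: "\<not> Rj False GE Glam GV 1 4 t"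
proof
  assume R: "Rj False GE Glam GV 1 4 t"
  obtain w where w: "w\<in>GV" "w\<noteq>4" "{w,4}\<in>GE" "t\<in>Glam{w,4}"
    and wo: "w=1 \<or> (\<exists>t'\<le>t. Rj False GE Glam (GV-{4}) 1 w t')" using R_pred[OF R] by auto
  have wv: "w=3" using w(3) by (auto simp: GE_simp)
  then have "t = 2" using w(4) by (auto simp: Glam_simp)
  obtain t' where t': "t' \<le> 2" "Rj False GE Glam (GV-{4}) 1 3 t'" using wo wv \<open>t = 2\<close> by auto
  obtain w' where w': "w'\<in>GV-{4}" "w'\<noteq>3" "{w',3}\<in>GE" "t'\<in>Glam{w',3}"
    and wo': "w'=1 \<or> (\<exists>t''\<le>t'. Rj False GE Glam (GV-{4}-{3}) 1 w' t'')"
    using R_pred[OF t'(2)] by auto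
  have "w' = 0" using w' t'(1) by (auto simp: GS)
  then obtain t'' where t'': "t'' \<le> 1" "Rj False GE Glam (GV-{4}-{3}) 1 0 t''"
    using wo' w' by (auto simp: GS)
  obtain w'' where w'': "w''\<in>GV-{4}-{3}" "w''\<noteq>0" "{w'',0}\<in>GE" "t''\<in>Glam{w'',0}"
    and wo'': "w''=1 \<or> (\<exists>t3\<le>t''. Rj False GE Glam (GV-{4}-{3}-{0}) 1 w'' t3)"
    using R_pred[OF t''(2)] by auto
  have "w'' = 2" using w'' by (auto simp: GS)
  then have "w'' \<noteq> 1" by simp
  then obtain t3 where "t3 \<le> t''" "Rj False GE Glam (GV-{4}-{3}-{0}) 1 w'' t3" using wo'' by blast
  then have t3: "t3 \<le> 1" "Rj False GE Glam (GV-{4}-{3}-{0}) 1 2 t3"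
    using t''(1) \<open>w'' = 2\<close> by simp_all
  obtain w3 where w3: "w3\<in>GV-{4}-{3}-{0}" "w3\<noteq>2" "{w3,2}\<in>GE" "t3\<in>Glam{w3,2}"
    using R_pred[OF t3(2)] by auto
  show False using w3 t3(1) by (auto simp: GS)
qed

lemma n40: "\<not> Rj False GE Glam GV 4 0 t"
proof
  assume R: "Rj False GE Glam GV 4 0 t"
  obtain w where w: "w\<in>GV" "w\<noteq>0" "{w,0}\<in>GE" "t\<in>Glam{w,0}"
    and wo: "w=4 \<or> (\<exists>t'\<le>t. Rj False GE Glam (GV-{0}) 4 w t')" using R_pred[OF R] by auto
  have wv: "w=2 \<or> w=3" using w(3) by (auto simp: GE_simp)
  then have "t = 1" using w(4) by (auto simp: Glam_simp)
  obtain t' where t': "t' \<le> 1" "Rj False GE Glam (GV-{0}) 4 w t'" using wo wv \<open>t = 1\<close> by auto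
  obtain w' where w': "w'\<in>GV-{0}" "w'\<noteq>w" "{w',w}\<in>GE" "t'\<in>Glam{w',w}"
    using R_pred[OF t'(2)] by (metis (no_types, lifting))
  show False using wv w' t'(1) by (auto simp: GS)
qed

lemma n41: "\<not> Rj False GE Glam GV 4 1 t"
proof
  assume R: "Rj False GE Glam GV 4 1 t"
  obtain w where w: "w\<in>GV" "w\<noteq>1" "{w,1}\<in>GE" "t\<in>Glam{w,1}"
    and wo: "w=4 \<or> (\<exists>t'\<le>t. Rj False GE Glam (GV-{1}) 4 w t')" using R_pred[OF R] by auto
  have wv: "w=2" using w(3) by (auto simp: GE_simp)
  then have "t = 2" using w(4) by (auto simp: Glam_simp)
  obtain t' where t': "t' \<le> 2" "Rj False GE Glam (GV-{1}) 4 2 t'" using wo wv \<open>t = 2\<close> by auto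
  obtain w' where w': "w'\<in>GV-{1}" "w'\<noteq>2" "{w',2}\<in>GE" "t'\<in>Glam{w',2}"
    and wo': "w'=4 \<or> (\<exists>t''\<le>t'. Rj False GE Glam (GV-{1}-{2}) 4 w' t'')"
    using R_pred[OF t'(2)] by auto
  have "w' = 0" using w' t'(1) by (auto simp: GS)
  then obtain t'' where t'': "t'' \<le> 1" "Rj False GE Glam (GV-{1}-{2}) 4 0 t''"
    using wo' w' by (auto simp: GS)
  obtain w'' where w'': "w''\<in>GV-{1}-{2}" "w''\<noteq>0" "{w'',0}\<in>GE" "t''\<in>Glam{w'',0}"
    and wo'': "w''=4 \<or> (\<exists>t3\<le>t''. Rj False GE Glam (GV-{1}-{2}-{0}) 4 w'' t3)"
    using R_pred[OF t''(2)] by auto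
  have "w'' = 3" using w'' by (auto simp: GS)
  then have "w'' \<noteq> 4" by simp
  then obtain t3 where "t3 \<le> t''" "Rj False GE Glam (GV-{1}-{2}-{0}) 4 w'' t3" using wo'' by blast
  then have t3: "t3 \<le> 1" "Rj False GE Glam (GV-{1}-{2}-{0}) 4 3 t3"
    using t''(1) \<open>w'' = 3\<close> by simp_all
  obtain w3 where w3: "w3\<in>GV-{1}-{2}-{0}" "w3\<noteq>3" "{w3,3}\<in>GE" "t3\<in>Glam{w3,3}"
    using R_pred[OF t3(2)] by auto
  show False using w3 t3(1) by (auto simp: GS)
qed

lemma neg_arcs:
  "(1,0) \<notin> reach_arcs False GV GE Glam" "(1,4) \<notin> reach_arcs False GV GE Glam"
  "(4,0) \<notin> reach_arcs False GV GE Glam" "(4,1) \<notin> reach_arcs False GV GE Glam"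
  using arcR n10 n14 n40 n41 by blast+



theorem mainTheorem7:
  shows "\<exists>(V :: nat set) E lam. temporal_graph V E lam \<and> simple_tg E lam \<and>
           (\<forall>(W :: 'b set) F mu. temporal_graph W F mu \<and> happy F mu \<longrightarrow>
              \<not> digraph_iso V (reach_arcs False V E lam) W (reach_arcs True W F mu))"
proof (intro exI conjI allI impI)
  show "temporal_graph GV GE Glam" by (rule G_tg)
  show "simple_tg GE Glam" by (rule G_simple)
  fix W :: "'b set" and F mu
  assume H: "temporal_graph W F mu \<and> happy F mu"
  show "\<not> digraph_iso GV (reach_arcs False GV GE Glam) W (reach_arcs True W F mu)"
  proof
    assume "digraph_iso GV (reach_arcs False GV GE Glam) W (reach_arcs True W F mu)"
    then obtain f where bij: "bij_betw f GV W"
      and iso: "\<forall>u\<in>GV. \<forall>v\<in>GV. (u, v) \<in> reach_arcs False GV GE Glam \<longleftrightarrow> (f u, f v) \<in> reach_arcs True W F mu"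
      unfolding digraph_iso_def by blast
    have Weq: "W = {f 0, f 1, f 2, f 3, f 4}"
      using bij_betw_imp_surj_on[OF bij] by (simp add: GV_def)
    have "inj_on f GV" using bij_betw_imp_inj_on[OF bij] .
    then have dist: "distinct [f 0, f 1, f 2, f 3, f 4]"
      unfolding inj_on_def GV_def by auto
    have P: "\<And>u v. u \<in> GV \<Longrightarrow> v \<in> GV \<Longrightarrow> (f u, f v) \<in> reach_arcs True W F mu \<longleftrightarrow> (u, v) \<in> reach_arcs False GV GE Glam"
      using iso by blast
    have GVm: "0 \<in> GV" "1 \<in> GV" "2 \<in> GV" "3 \<in> GV" "4 \<in> GV" by (simp_all add: GV_def)
    interpret HH W F mu "f 0" "f 1" "f 2" "f 3" "f 4"
      apply unfold_locales
      using H Weq dist pos_arcs neg_arcs P[OF GVm(1) GVm(2)] P[OF GVm(1) GVm(5)] P[OF GVm(3) GVm(5)]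
        P[OF GVm(3) GVm(2)] P[OF GVm(4) GVm(5)] P[OF GVm(4) GVm(2)] P[OF GVm(2) GVm(3)]
        P[OF GVm(2) GVm(4)] P[OF GVm(5) GVm(3)] P[OF GVm(5) GVm(4)]
        P[OF GVm(2) GVm(1)] P[OF GVm(2) GVm(5)] P[OF GVm(5) GVm(1)] P[OF GVm(5) GVm(2)]
      by simp_all
    show False by (rule contra)
  qed
qed

end
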